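(* Let $\mathbb{X}\subset\mathbb{R}^{d_{\mathbb{X}}}$ and $\mathbb{S}\subset\mathbb{R}^{d_{\mathbb{S}}}$ be bounded sets, $\mathbb{U}=\mathbb{X}\times\mathbb{S}$, let $\mathbb{P}_S$ be a probability distribution on $\mathbb{S}$, let $C\subset\mathbb{R}^q$ and $\alpha\in(0,1)$. For a function $g:\mathbb{U}\to\mathbb{R}^q$ define the quantile set $$\Gamma(g)=\Big\{x\in\mathbb{X}:\int_{\mathbb{S}}\mathbb{1}_C(g(x,s))\,\mathrm{d}\mathbb{P}_S(s)\le\alpha\Big\}.$$ Let $\xi$ be a Gaussian process prior on $\mathbb{U}$ with mean $\mu$ and covariance $k$, observed sequentially at points $U_i\in\mathbb{U}$ through $Z_i^{obs}=\xi(U_i)+\epsilon_i$ with $\epsilon_i\sim\mathcal{N}(0,\Sigma)$ i.i.d. Let $\mathcal{I}_n$ denote the information (initial data plus $(U_1,Z_1^{obs}),\dots,(U_n,Z_n^{obs})$), $\mathbb{P}_n$, $\mathbb{E}_n$ the conditional probability and expectation given $\mathcal{I}_n$, and $\pi_n(x)=\mathbb{P}_n(x\in\Gamma(\xi))$. Fix a batch size $r\ge1$ and set $$\mathcal{H}_{n+r}=\int_{\mathbb{X}}\min(\pi_{n+r}(x),1-\pi_{n+r}(x))\,\mathrm{d}x,\qquad J_n(u_{n+1},\dots,u_{n+r})=\mathbb{E}_n\big(\mathcal{H}_{n+r}\,\big|\,U_{n+i}=u_{n+i},\ i=1,\dots,r\big).$$ Let $\Gamma^{\mathrm{B}}_n=\{x\in\mathbb{X}:\pi_n(x)>1/2\}$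 and let $A\,\Delta\,B=(A\setminus B)\cup(B\setminus A)$ denote the symmetric difference. Then $$\underset{u\in\mathbb{U}^r}{\arg\min}\,J_n(u)=\underset{u\in\mathbb{U}^r}{\arg\max}\,G_n(u),$$ where $$G_n(u)=\int_{\mathbb{X}}\mathbb{E}_n\Big(|2\pi_{n+r}(x)-1|\cdot\mathbb{1}_{\Gamma^{\mathrm{B}}_{n+r}\,\Delta\,\Gamma^{\mathrm{B}}_n}(x)\,\Big|\,U_{n+i}=u_{n+i},\ i=1,\dots,r\Big)\,\mathrm{d}x.$$
   Context: Here $u=(u_{n+1},\dots,u_{n+r})$; $\pi_{n+r}$ and $\Gamma^{\mathrm{B}}_{n+r}$ are the corresponding quantities computed from the information $\mathcal{I}_{n+r}$ obtained after observing the batch at $U_{n+1},\dots,U_{n+r}$. The integrals over $\mathbb{X}$ are with respect to Lebesgue measure. The noise covariance $\Sigma$ is a $q\times q$ matrix (possibly zero), and the GP parameters and $\Sigma$ are assumed known. *)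

theory Defs
  imports "HOL-Probability.Probability"
begin

definition gaussian_real :: "'a measure \<Rightarrow> ('a \<Rightarrow> real) \<Rightarrow> real \<Rightarrow> real \<Rightarrow> bool" where
  "gaussian_real M Y mu v \<longleftrightarrow>
     Y \<in> borel_measurable M \<and> 0 \<le> v \<and>
     (if v = 0 then (AE \<omega> in M. Y \<omega> = mu)
      else distributed M lborel Y (normal_density mu (sqrt v)))"

definition gaussian_process ::
  "'a measure \<Rightarrow> ('a \<Rightarrow> 'i \<Rightarrow> real^'q) \<Rightarrow> 'i set \<Rightarrow> ('i \<Rightarrow> real^'q)
     \<Rightarrow> ('i \<Rightarrow> 'i \<Rightarrow> real^'q^'q) \<Rightarrow> bool" where
  "gaussian_process M Y T m K \<longleftrightarrow>
     (\<forall>(N::nat) (t::nat \<Rightarrow> 'i) (a::nat \<Rightarrow> real^'q). (\<forall>i<N. t i \<in> T) \<longrightarrow>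
        gaussian_real M (\<lambda>\<omega>. \<Sum>i<N. a i \<bullet> Y \<omega> (t i))
          (\<Sum>i<N. a i \<bullet> m (t i))
          (\<Sum>i<N. \<Sum>j<N. a i \<bullet> (K (t i) (t j) *v a j)))"

text \<open>Field xi augmented by the batch noises eps 0, ..., eps (r-1).\<close>
definition aug_field :: "('a \<Rightarrow> 'u \<Rightarrow> real^'q) \<Rightarrow> (nat \<Rightarrow> 'a \<Rightarrow> real^'q) \<Rightarrow> 'a \<Rightarrow> 'u + nat \<Rightarrow> real^'q" where
  "aug_field \<xi> \<epsilon> \<omega> i = (case i of Inl t \<Rightarrow> \<xi> \<omega> t | Inr j \<Rightarrow> \<epsilon> j \<omega>)"

definition aug_mean :: "('u \<Rightarrow> real^'q) \<Rightarrow> 'u + nat \<Rightarrow> real^'q" where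
  "aug_mean m i = (case i of Inl t \<Rightarrow> m t | Inr j \<Rightarrow> 0)"

text \<open>Noises are i.i.d. N(0, Sigma) and independent of xi (zero cross covariance).\<close>
definition aug_cov :: "('u \<Rightarrow> 'u \<Rightarrow> real^'q^'q) \<Rightarrow> real^'q^'q \<Rightarrow> 'u + nat \<Rightarrow> 'u + nat \<Rightarrow> real^'q^'q" where
  "aug_cov k \<Sigma> i i' = (case (i, i') of
      (Inl t, Inl t') \<Rightarrow> k t t'
    | (Inr a, Inr b) \<Rightarrow> (if a = b then \<Sigma> else 0)
    | _ \<Rightarrow> 0)"

definition quantile_set ::
  "('x::euclidean_space) set \<Rightarrow> ('s::euclidean_space) measure \<Rightarrow> (real^'q) set \<Rightarrow> real
     \<Rightarrow> ('x \<times> 's \<Rightarrow> real^'q) \<Rightarrow> 'x set" where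
  "quantile_set X PS C \<alpha> g = {x \<in> X. (\<integral>s. indicator C (g (x, s)) \<partial>PS) \<le> \<alpha>}"

definition obs_algebra ::
  "'a measure \<Rightarrow> ('a \<Rightarrow> 'u \<Rightarrow> real^'q) \<Rightarrow> (nat \<Rightarrow> 'a \<Rightarrow> real^'q) \<Rightarrow> nat \<Rightarrow> (nat \<Rightarrow> 'u) \<Rightarrow> 'a measure" where
  "obs_algebra M \<xi> \<epsilon> r u =
     vimage_algebra (space M) (\<lambda>\<omega>. \<lambda>j\<in>{..<r}. \<xi> \<omega> (u j) + \<epsilon> j \<omega>) (PiM {..<r} (\<lambda>_. borel))"

definition symdiff :: "'x set \<Rightarrow> 'x set \<Rightarrow> 'x set" where
  "symdiff A B = (A - B) \<union> (B - A)"

definition argmin_set :: "('b \<Rightarrow> real) \<Rightarrow> 'b set \<Rightarrow> 'b set" where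
  "argmin_set f A = {u \<in> A. \<forall>v\<in>A. f u \<le> f v}"

definition argmax_set :: "('b \<Rightarrow> real) \<Rightarrow> 'b set \<Rightarrow> 'b set" where
  "argmax_set f A = {u \<in> A. \<forall>v\<in>A. f v \<le> f u}"

end

theory Submission
  imports Defs
begin

lemma eps_meas:
  fixes \<epsilon> :: "nat \<Rightarrow> 'a \<Rightarrow> real^'q"
  assumes GP: "gaussian_process M (aug_field \<xi> \<epsilon>) (Inl ` T \<union> Inr ` {..<r}) (aug_mean m) (aug_cov k \<Sigma>)"
    and j: "j < r"
  shows "\<epsilon> j \<in> borel_measurable M"
proof -
  have "(\<lambda>\<omega>. \<epsilon> j \<omega> \<bullet> b) \<in> borel_measurable M" for b :: "real^'q"
  proof -
    have "gaussian_real M (\<lambda>\<omega>. b \<bullet> aug_field \<xi> \<epsilon> \<omega> (Inr j)) (b \<bullet> aug_mean m (Inr j)) (b \<bullet> (aug_cov k \<Sigma> (Inr j) (Inr j) *v b))"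
      using GP[unfolded gaussian_process_def, rule_format, of 1 "\<lambda>_. Inr j" "\<lambda>_. b"] j by simp
    then show ?thesis by (simp add: gaussian_real_def aug_field_def inner_commute)
  qed
  then show ?thesis by (subst borel_measurable_euclidean_space) auto
qed

lemma xi_point_meas:
  assumes xi_meas: "(\<lambda>(\<omega>, t). \<xi> \<omega> t) \<in> borel_measurable (M \<Otimes>\<^sub>M restrict_space borel T)"
    and t: "t \<in> T"
  shows "(\<lambda>\<omega>. \<xi> \<omega> t) \<in> borel_measurable M"
proof -
  have "(\<lambda>\<omega>. (\<omega>, t)) \<in> M \<rightarrow>\<^sub>M M \<Otimes>\<^sub>M restrict_space borel T"
    using t by (intro measurable_Pair measurable_ident_sets) (auto simp: space_restrict_space)
  from measurable_comp[OF this xi_meas] show ?thesis by (simp add: o_def)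
qed

lemma obs_subalg:
  assumes xi_meas: "(\<lambda>(\<omega>, t). \<xi> \<omega> t) \<in> borel_measurable (M \<Otimes>\<^sub>M restrict_space borel T)"
    and GP: "gaussian_process M (aug_field \<xi> \<epsilon>) (Inl ` T \<union> Inr ` {..<r}) (aug_mean m) (aug_cov k \<Sigma>)"
    and u: "u \<in> {..<r} \<rightarrow>\<^sub>E T"
    and M: "prob_space M"
  shows "sigma_finite_subalgebra M (obs_algebra M \<xi> \<epsilon> r u)"
proof -
  let ?f = "\<lambda>\<omega>. \<lambda>j\<in>{..<r}. \<xi> \<omega> (u j) + \<epsilon> j \<omega>"
  have fm: "?f \<in> M \<rightarrow>\<^sub>M PiM {..<r} (\<lambda>_. borel)"
  proof (rule measurable_restrict)
    fix j assume j: "j \<in> {..<r}"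
    show "(\<lambda>\<omega>. \<xi> \<omega> (u j) + \<epsilon> j \<omega>) \<in> borel_measurable M"
      using xi_point_meas[OF xi_meas] eps_meas[OF GP] j u by (intro borel_measurable_add) auto
  qed
  have fs: "?f \<in> space M \<rightarrow> space (PiM {..<r} (\<lambda>_. borel))"
    using measurable_space[OF fm] by auto
  have "subalgebra M (obs_algebra M \<xi> \<epsilon> r u)"
    unfolding subalgebra_def obs_algebra_def
    using fm by (auto simp: sets_vimage_algebra2[OF fs] measurable_sets)
  then show ?thesis
    using M by (intro finite_measure_subalgebra_is_sigma_finite)
      (simp add: finite_measure_subalgebra_def finite_measure_subalgebra_axioms_def prob_space.finite_measure)
qed

lemma qs_meas:
  fixes \<xi> :: "'a \<Rightarrow> ((real^'dx) \<times> (real^'ds)) \<Rightarrow> real^'q" and PS :: "(real^'ds) measure"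
  assumes xi_meas: "(\<lambda>(\<omega>, t). \<xi> \<omega> t) \<in> borel_measurable (M \<Otimes>\<^sub>M restrict_space borel (X \<times> S))"
    and PS: "prob_space PS" "sets PS = sets (restrict_space borel S)"
    and C_meas: "C \<in> sets borel"
    and x: "x \<in> X"
  shows "{\<omega>\<in>space M. x \<in> quantile_set X PS C \<alpha> (\<xi> \<omega>)} \<in> sets M"
proof -
  have h0: "(\<lambda>s::real^'ds. (x,s)) \<in> borel \<rightarrow>\<^sub>M (borel :: ((real^'dx) \<times> (real^'ds)) measure)"
    by (intro borel_measurable_continuous_onI continuous_intros)
  have h1: "(\<lambda>s::real^'ds. (x,s)) \<in> restrict_space borel S \<rightarrow>\<^sub>M restrict_space borel (X \<times> S)"
    using x by (intro measurable_restrict_space3[OF h0]) auto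
  have h2: "(\<lambda>s::real^'ds. (x,s)) \<in> PS \<rightarrow>\<^sub>M restrict_space borel (X \<times> S)"
    using h1 measurable_cong_sets[OF PS(2) refl, of "restrict_space borel (X \<times> S)"] by simp
  have g: "(\<lambda>z. (fst z, (x, snd z))) \<in> M \<Otimes>\<^sub>M PS \<rightarrow>\<^sub>M M \<Otimes>\<^sub>M restrict_space borel (X \<times> S)"
    by (intro measurable_Pair measurable_fst measurable_compose[OF measurable_snd h2])
  have f: "(\<lambda>z. \<xi> (fst z) (x, snd z)) \<in> borel_measurable (M \<Otimes>\<^sub>M PS)"
    using measurable_comp[OF g xi_meas] by (simp add: o_def case_prod_beta)
  have fi: "(\<lambda>(\<omega>, s). indicator C (\<xi> \<omega> (x, s)) :: real) \<in> borel_measurable (M \<Otimes>\<^sub>M PS)"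
    unfolding case_prod_beta
  proof (rule borel_measurable_indicator')
    have "{p \<in> space (M \<Otimes>\<^sub>M PS). \<xi> (fst p) (x, snd p) \<in> C} = (\<lambda>z. \<xi> (fst z) (x, snd z)) -` C \<inter> space (M \<Otimes>\<^sub>M PS)"
      by auto
    then show "{p \<in> space (M \<Otimes>\<^sub>M PS). \<xi> (fst p) (x, snd p) \<in> C} \<in> sets (M \<Otimes>\<^sub>M PS)"
      using measurable_sets[OF f C_meas] by simp
  qed
  have I: "(\<lambda>\<omega>. \<integral>s. indicator C (\<xi> \<omega> (x, s)) \<partial>PS :: real) \<in> borel_measurable M"
    using PS(1) fi
    by (intro sigma_finite_measure.borel_measurable_lebesgue_integral)
       (auto simp: prob_space_imp_sigma_finite)
  have "{\<omega>\<in>space M. x \<in> quantile_set X PS C \<alpha> (\<xi> \<omega>)} =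
        {\<omega>\<in>space M. (\<integral>s. indicator C (\<xi> \<omega> (x, s)) \<partial>PS) \<le> \<alpha>}"
    using x by (auto simp: quantile_set_def)
  also have "\<dots> \<in> sets M" using I by measurable
  finally show ?thesis .
qed

lemma cond_ind_props:
  assumes sfs: "sigma_finite_subalgebra M F" and M: "prob_space M"
    and Pset: "{\<omega>\<in>space M. P \<omega>} \<in> sets M"
    and pm: "p \<in> borel_measurable M"
    and ver: "AE \<omega> in M. p \<omega> = real_cond_exp M F (\<lambda>\<omega>. if P \<omega> then 1 else 0) \<omega>"
  shows "integrable M p" "AE \<omega> in M. 0 \<le> p \<omega> \<and> p \<omega> \<le> 1"
    "(\<integral>\<omega>. p \<omega> \<partial>M) = measure M {\<omega>\<in>space M. P \<omega>}"
proof -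
  interpret sigma_finite_subalgebra M F by (rule sfs)
  interpret P: prob_space M by (rule M)
  let ?f = "\<lambda>\<omega>. if P \<omega> then 1 else (0::real)"
  have feq: "\<And>\<omega>. \<omega> \<in> space M \<Longrightarrow> ?f \<omega> = indicator {\<omega>\<in>space M. P \<omega>} \<omega>"
    by (auto simp: indicator_def)
  have fm: "?f \<in> borel_measurable M"
    using borel_measurable_indicator[OF Pset] by (subst measurable_cong[OF feq]) auto
  have fi: "integrable M ?f"
    using fm by (intro P.integrable_const_bound[where B=1]) auto
  have ci: "integrable M (real_cond_exp M F ?f)" using real_cond_exp_int(1)[OF fi] .
  show pi: "integrable M p"
    using ci ver pm by (subst integrable_cong_AE[OF pm borel_measurable_cond_exp2]) auto
  have "AE \<omega> in M. real_cond_exp M F ?f \<omega> \<ge> 0"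
    by (rule real_cond_exp_ge_c[OF fi]) auto
  moreover have "AE \<omega> in M. real_cond_exp M F ?f \<omega> \<le> 1"
    by (rule real_cond_exp_le_c[OF fi]) auto
  ultimately show "AE \<omega> in M. 0 \<le> p \<omega> \<and> p \<omega> \<le> 1" using ver by eventually_elim auto
  have "(\<integral>\<omega>. p \<omega> \<partial>M) = (\<integral>\<omega>. real_cond_exp M F ?f \<omega> \<partial>M)"
    using ver by (intro integral_cong_AE pm) auto
  also have "\<dots> = (\<integral>\<omega>. ?f \<omega> \<partial>M)" using real_cond_exp_int(2)[OF fi] .
  also have "\<dots> = (\<integral>\<omega>. indicator {\<omega>\<in>space M. P \<omega>} \<omega> \<partial>M)"
    using feq by (intro Bochner_Integration.integral_cong) auto
  also have "\<dots> = measure M {\<omega>\<in>space M. P \<omega>}" using Pset by simp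
  finally show "(\<integral>\<omega>. p \<omega> \<partial>M) = measure M {\<omega>\<in>space M. P \<omega>}" .
qed

lemma key:
  fixes p :: "real^'dx \<Rightarrow> 'a \<Rightarrow> real" and \<pi>n :: "real^'dx \<Rightarrow> real" and X :: "(real^'dx) set"
  assumes M: "prob_space M" and bX: "bounded X" and X_meas: "X \<in> sets lebesgue"
    and pm: "(\<lambda>(\<omega>, x). p x \<omega>) \<in> borel_measurable (M \<Otimes>\<^sub>M lborel)"
    and pint: "\<And>x. x \<in> X \<Longrightarrow> integrable M (p x)"
    and pb: "\<And>x. x \<in> X \<Longrightarrow> AE \<omega> in M. 0 \<le> p x \<omega> \<and> p x \<omega> \<le> 1"
    and pe: "\<And>x. x \<in> X \<Longrightarrow> (\<integral>\<omega>. p x \<omega> \<partial>M) = \<pi>n x"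
  shows "(\<integral>\<omega>. (LINT x:X|lebesgue. min (p x \<omega>) (1 - p x \<omega>)) \<partial>M) +
     (LINT x:X|lebesgue. (\<integral>\<omega>. \<bar>2 * p x \<omega> - 1\<bar> *
          indicator (symdiff {x\<in>X. p x \<omega> > 1/2} {x\<in>X. \<pi>n x > 1/2}) x \<partial>M))
   = measure lebesgue X / 2 - (LINT x:X|lebesgue. \<bar>2 * \<pi>n x - 1\<bar>) / 2"
proof -
  define N where "N = lebesgue_on X"
  interpret P: prob_space M by (rule M)
  have Xl: "X \<in> lmeasurable" by (rule bounded_set_imp_lmeasurable[OF bX X_meas])
  interpret N: finite_measure N unfolding N_def by (rule finite_measure_lebesgue_on[OF Xl])
  interpret NM: pair_sigma_finite N M
    unfolding pair_sigma_finite_def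
    using N.sigma_finite_measure_axioms P.sigma_finite_measure_axioms by simp
  interpret NMf: finite_measure "N \<Otimes>\<^sub>M M"
    by (rule finite_measure_pair_measure) (unfold_locales)
  have spN: "space N = X" unfolding N_def by (simp add: space_restrict_space)
  have lint: "\<And>f::real^'dx \<Rightarrow> real. set_lebesgue_integral lebesgue X f = integral\<^sup>L N f"
    unfolding N_def set_lebesgue_integral_def using X_meas by (simp add: integral_restrict_space)
  have pm': "(\<lambda>(\<omega>, x). p x \<omega>) \<in> borel_measurable (M \<Otimes>\<^sub>M borel)"
    using pm measurable_cong_sets[OF sets_pair_measure_cong[OF refl sets_lborel] refl] by blast
  have sw: "(\<lambda>z. (snd z, fst z)) \<in> N \<Otimes>\<^sub>M M \<rightarrow>\<^sub>M M \<Otimes>\<^sub>M borel"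
  proof (intro measurable_Pair measurable_snd)
    show "fst \<in> N \<Otimes>\<^sub>M M \<rightarrow>\<^sub>M borel"
      using measurable_compose[OF measurable_fst id_borel_measurable_lebesgue_on[of X]]
      unfolding N_def by (simp add: o_def)
  qed
  have qm: "(\<lambda>z. p (fst z) (snd z)) \<in> borel_measurable (N \<Otimes>\<^sub>M M)"
    using measurable_comp[OF sw pm'] by (simp add: o_def)
  have qm2 [measurable]: "(\<lambda>(x, \<omega>). p x \<omega>) \<in> borel_measurable (N \<Otimes>\<^sub>M M)"
    using qm by (simp add: case_prod_beta)
  have AEb: "AE z in N \<Otimes>\<^sub>M M. 0 \<le> p (fst z) (snd z) \<and> p (fst z) (snd z) \<le> 1"
  proof (rule NM.AE_pair_measure)
    show "{z \<in> space (N \<Otimes>\<^sub>M M). 0 \<le> p (fst z) (snd z) \<and> p (fst z) (snd z) \<le> 1} \<in> sets (N \<Otimes>\<^sub>M M)"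
      using qm by measurable
    show "AE x in N. AE y in M. 0 \<le> p (fst (x, y)) (snd (x, y)) \<and> p (fst (x, y)) (snd (x, y)) \<le> 1"
      by (rule AE_I2) (use pb in \<open>simp add: spN\<close>)
  qed
  have int1: "integrable (N \<Otimes>\<^sub>M M) (\<lambda>(x, \<omega>). min (p x \<omega>) (1 - p x \<omega>))"
    by (rule NMf.integrable_const_bound[where B=1]) (use AEb in \<open>auto simp: case_prod_beta\<close>)
  have int2: "integrable (N \<Otimes>\<^sub>M M) (\<lambda>z. \<bar>2 * p (fst z) (snd z) - 1\<bar>)"
    by (rule NMf.integrable_const_bound[where B=1]) (use AEb qm in \<open>auto\<close>)
  define h where "h x = (\<integral>\<omega>. \<bar>2 * p x \<omega> - 1\<bar> \<partial>M)" for x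
  have hI: "integrable N h"
    using NM.integrable_fst'[OF int2] unfolding h_def by simp
  have pI2: "integrable M (\<lambda>\<omega>. \<bar>2 * p x \<omega> - 1\<bar>)" if "x \<in> X" for x
    using pint[OF that] by auto
  have minx: "(\<integral>\<omega>. min (p x \<omega>) (1 - p x \<omega>) \<partial>M) = 1/2 - h x / 2" if x: "x \<in> X" for x
  proof -
    have "(\<integral>\<omega>. min (p x \<omega>) (1 - p x \<omega>) \<partial>M) = (\<integral>\<omega>. 1/2 - \<bar>2 * p x \<omega> - 1\<bar> / 2 \<partial>M)"
      by (intro Bochner_Integration.integral_cong) (auto simp: min_def abs_if field_simps)
    also have "\<dots> = (\<integral>\<omega>. 1/2 \<partial>M) - (\<integral>\<omega>. \<bar>2 * p x \<omega> - 1\<bar> / 2 \<partial>M)"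
      using pI2[OF x] by (intro Bochner_Integration.integral_diff) auto
    also have "\<dots> = 1/2 - h x / 2" unfolding h_def by (simp add: P.prob_space)
    finally show ?thesis .
  qed
  have J: "(\<integral>\<omega>. (LINT x:X|lebesgue. min (p x \<omega>) (1 - p x \<omega>)) \<partial>M) = measure lebesgue X / 2 - integral\<^sup>L N h / 2"
  proof -
    have "(\<integral>\<omega>. (LINT x:X|lebesgue. min (p x \<omega>) (1 - p x \<omega>)) \<partial>M)
        = (\<integral>\<omega>. (\<integral>x. min (p x \<omega>) (1 - p x \<omega>) \<partial>N) \<partial>M)"
      by (simp only: lint)
    also have "\<dots> = (\<integral>x. (\<integral>\<omega>. min (p x \<omega>) (1 - p x \<omega>) \<partial>M) \<partial>N)"
      by (rule NM.Fubini_integral[OF int1])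
    also have "\<dots> = (\<integral>x. 1/2 - h x / 2 \<partial>N)"
      by (intro Bochner_Integration.integral_cong) (auto simp: spN minx)
    also have "\<dots> = (\<integral>x. 1/2 \<partial>N) - (\<integral>x. h x / 2 \<partial>N)"
      using hI by (intro Bochner_Integration.integral_diff) auto
    also have "\<dots> = measure N (space N) / 2 - integral\<^sup>L N h / 2" by simp
    also have "measure N (space N) = measure lebesgue X"
      unfolding spN N_def using X_meas by (simp add: measure_restrict_space)
    finally show ?thesis .
  qed
  have pi01: "0 \<le> \<pi>n x \<and> \<pi>n x \<le> 1" if x: "x \<in> X" for x
  proof -
    have "0 \<le> (\<integral>\<omega>. p x \<omega> \<partial>M)"
      using pb[OF x] by (intro integral_nonneg_AE) auto
    moreover have "(\<integral>\<omega>. p x \<omega> \<partial>M) \<le> (\<integral>\<omega>. 1 \<partial>M)"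
      using pb[OF x] pint[OF x] by (intro integral_mono_AE) auto
    ultimately show ?thesis using pe[OF x] by (simp add: P.prob_space)
  qed
  define c where "c x = \<bar>2 * \<pi>n x - 1\<bar>" for x
  have cI: "integrable N c"
  proof (rule N.integrable_const_bound[where B=1])
    show "AE x in N. norm (c x) \<le> 1"
      by (rule AE_I2) (use pi01 in \<open>force simp: spN c_def abs_le_iff\<close>)
    have "(\<lambda>x. \<bar>2 * (\<integral>\<omega>. p x \<omega> \<partial>M) - 1\<bar>) \<in> borel_measurable N"
      using P.borel_measurable_lebesgue_integral[of "\<lambda>x \<omega>. p x \<omega>" N] qm2 by measurable
    then show "c \<in> borel_measurable N"
      by (subst measurable_cong[where g="\<lambda>x. \<bar>2 * (\<integral>\<omega>. p x \<omega> \<partial>M) - 1\<bar>"]) (auto simp: spN c_def pe)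
  qed
  have Gx: "(\<integral>\<omega>. \<bar>2 * p x \<omega> - 1\<bar> * indicator (symdiff {x\<in>X. p x \<omega> > 1/2} {x\<in>X. \<pi>n x > 1/2}) x \<partial>M)
      = h x / 2 - c x / 2" if x: "x \<in> X" for x
  proof -
    define sg where "sg = (if \<pi>n x > 1/2 then 1 else -1 :: real)"
    have "(\<integral>\<omega>. \<bar>2 * p x \<omega> - 1\<bar> * indicator (symdiff {x\<in>X. p x \<omega> > 1/2} {x\<in>X. \<pi>n x > 1/2}) x \<partial>M)
       = (\<integral>\<omega>. \<bar>2 * p x \<omega> - 1\<bar> / 2 - (p x \<omega> * sg - 1/2 * sg) \<partial>M)"
      using x by (intro Bochner_Integration.integral_cong)
         (auto simp: symdiff_def indicator_def sg_def abs_if field_simps)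
    also have "\<dots> = (\<integral>\<omega>. \<bar>2 * p x \<omega> - 1\<bar> / 2 \<partial>M) - (\<integral>\<omega>. p x \<omega> * sg - 1/2 * sg \<partial>M)"
      using pI2[OF x] pint[OF x] by (intro Bochner_Integration.integral_diff) auto
    also have "(\<integral>\<omega>. p x \<omega> * sg - 1/2 * sg \<partial>M) = (\<integral>\<omega>. p x \<omega> * sg \<partial>M) - (\<integral>\<omega>. 1/2 * sg \<partial>M)"
      using pint[OF x] by (intro Bochner_Integration.integral_diff) auto
    also have "\<dots> = \<pi>n x * sg - 1/2 * sg" using pe[OF x] by (simp add: P.prob_space)
    also have "\<pi>n x * sg - 1/2 * sg = c x / 2" unfolding c_def sg_def by (auto simp: abs_if)
    finally show ?thesis unfolding h_def by simp
  qed
  have G: "(LINT x:X|lebesgue. (\<integral>\<omega>. \<bar>2 * p x \<omega> - 1\<bar> *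
          indicator (symdiff {x\<in>X. p x \<omega> > 1/2} {x\<in>X. \<pi>n x > 1/2}) x \<partial>M))
     = integral\<^sup>L N h / 2 - integral\<^sup>L N c / 2"
  proof -
    have "(LINT x:X|lebesgue. (\<integral>\<omega>. \<bar>2 * p x \<omega> - 1\<bar> *
          indicator (symdiff {x\<in>X. p x \<omega> > 1/2} {x\<in>X. \<pi>n x > 1/2}) x \<partial>M))
       = (\<integral>x. h x / 2 - c x / 2 \<partial>N)"
      unfolding lint by (intro Bochner_Integration.integral_cong refl) (rule Gx, simp add: spN)
    also have "\<dots> = (\<integral>x. h x / 2 \<partial>N) - (\<integral>x. c x / 2 \<partial>N)"
      using hI cI by (intro Bochner_Integration.integral_diff) auto
    finally show ?thesis by simp
  qed
  have C: "(LINT x:X|lebesgue. \<bar>2 * \<pi>n x - 1\<bar>) = integral\<^sup>L N c"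
    unfolding lint c_def ..
  show ?thesis using J G C by simp
qed

lemma argeq:
  assumes "\<And>u. u \<in> A \<Longrightarrow> J u + G u = (c::real)"
  shows "argmin_set J A = argmax_set G A"
proof -
  have "\<And>u v. u \<in> A \<Longrightarrow> v \<in> A \<Longrightarrow> (J u \<le> J v) = (G v \<le> G u)"
    using assms by (metis add.commute add_le_cancel_left add_le_cancel_right diff_add_cancel)
  then show ?thesis unfolding argmin_set_def argmax_set_def by auto
qed

theorem proposition4p1:
  fixes X :: "(real^'dx) set" and S :: "(real^'ds) set"
    and PS :: "(real^'ds) measure"
    and C :: "(real^'q) set" and \<alpha> :: real
    and M :: "'a measure"
    and \<xi> :: "'a \<Rightarrow> ((real^'dx) \<times> (real^'ds)) \<Rightarrow> real^'q"
    and m :: "((real^'dx) \<times> (real^'ds)) \<Rightarrow> real^'q"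
    and k :: "((real^'dx) \<times> (real^'ds)) \<Rightarrow> ((real^'dx) \<times> (real^'ds)) \<Rightarrow> real^'q^'q"
    and \<Sigma> :: "real^'q^'q"
    and r :: nat
    and \<epsilon> :: "nat \<Rightarrow> 'a \<Rightarrow> real^'q"
    and pin :: "(nat \<Rightarrow> (real^'dx) \<times> (real^'ds)) \<Rightarrow> real^'dx \<Rightarrow> 'a \<Rightarrow> real"
  assumes bX: "bounded X" and bS: "bounded S"
    and X_meas: "X \<in> sets lebesgue"
    and PS: "prob_space PS" "sets PS = sets (restrict_space borel S)"
    and C_meas: "C \<in> sets borel"
    and alpha: "0 < \<alpha>" "\<alpha> < 1"
    and r: "1 \<le> r"
    and M: "prob_space M"
    and xi_meas: "(\<lambda>(\<omega>, t). \<xi> \<omega> t) \<in> borel_measurable (M \<Otimes>\<^sub>M restrict_space borel (X \<times> S))"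
    and GP: "gaussian_process M (aug_field \<xi> \<epsilon>) (Inl ` (X \<times> S) \<union> Inr ` {..<r})
               (aug_mean m) (aug_cov k \<Sigma>)"
    and pin_meas: "\<And>u. u \<in> {..<r} \<rightarrow>\<^sub>E X \<times> S \<Longrightarrow>
               (\<lambda>(\<omega>, x). pin u x \<omega>) \<in> borel_measurable (M \<Otimes>\<^sub>M lborel)"
    and pin_version: "\<And>u x. u \<in> {..<r} \<rightarrow>\<^sub>E X \<times> S \<Longrightarrow> x \<in> X \<Longrightarrow>
               AE \<omega> in M. pin u x \<omega> =
                 real_cond_exp M (obs_algebra M \<xi> \<epsilon> r u)
                   (\<lambda>\<omega>'. if x \<in> quantile_set X PS C \<alpha> (\<xi> \<omega>') then 1 else 0) \<omega>"
  shows
    "let \<pi>n = (\<lambda>x. measure M {\<omega> \<in> space M. x \<in> quantile_set X PS C \<alpha> (\<xi> \<omega>)});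
         \<Gamma>Bn = {x \<in> X. \<pi>n x > 1/2};
         \<Gamma>Bnr = (\<lambda>u \<omega>. {x \<in> X. pin u x \<omega> > 1/2});
         J = (\<lambda>u. \<integral>\<omega>. (LINT x:X|lebesgue. min (pin u x \<omega>) (1 - pin u x \<omega>)) \<partial>M);
         G = (\<lambda>u. LINT x:X|lebesgue.
                (\<integral>\<omega>. \<bar>2 * pin u x \<omega> - 1\<bar> * indicator (symdiff (\<Gamma>Bnr u \<omega>) \<Gamma>Bn) x \<partial>M))
     in argmin_set J ({..<r} \<rightarrow>\<^sub>E X \<times> S) = argmax_set G ({..<r} \<rightarrow>\<^sub>E X \<times> S)"
proof -
  define \<pi>n where "\<pi>n = (\<lambda>x. measure M {\<omega> \<in> space M. x \<in> quantile_set X PS C \<alpha> (\<xi> \<omega>)})"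
  show ?thesis
    unfolding Let_def \<pi>n_def[symmetric]
  proof (rule argeq[where c = "measure lebesgue X / 2 - (LINT x:X|lebesgue. \<bar>2 * \<pi>n x - 1\<bar>) / 2"])
    fix u assume u: "u \<in> {..<r} \<rightarrow>\<^sub>E X \<times> S"
    have sfs: "sigma_finite_subalgebra M (obs_algebra M \<xi> \<epsilon> r u)"
      by (rule obs_subalg[OF xi_meas GP u M])
    have pmx: "pin u x \<in> borel_measurable M" for x
    proof -
      have "(\<lambda>\<omega>. (\<omega>, x)) \<in> M \<rightarrow>\<^sub>M M \<Otimes>\<^sub>M lborel"
        by (intro measurable_Pair measurable_ident_sets measurable_const) auto
      from measurable_comp[OF this pin_meas[OF u]] show ?thesis by (simp add: o_def)
    qed
    note props = cond_ind_props[OF sfs M qs_meas[OF xi_meas PS C_meas] pmx pin_version[OF u]]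
    show "(\<integral>\<omega>. (LINT x:X|lebesgue. min (pin u x \<omega>) (1 - pin u x \<omega>)) \<partial>M) +
     (LINT x:X|lebesgue. (\<integral>\<omega>. \<bar>2 * pin u x \<omega> - 1\<bar> *
          indicator (symdiff {x\<in>X. pin u x \<omega> > 1/2} {x\<in>X. \<pi>n x > 1/2}) x \<partial>M))
      = measure lebesgue X / 2 - (LINT x:X|lebesgue. \<bar>2 * \<pi>n x - 1\<bar>) / 2"
      apply (rule key[OF M bX X_meas pin_meas[OF u]])
      using props(1) apply blast
      using props(2) apply blast
      using props(3) by (simp add: \<pi>n_def)
  qed
qed

end
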